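(* Let $m\ge 3$. For every $\epsilon>0$ there exists $\delta>0$ such that if $f(z)=z^{m}+\sum_{k=0}^{m-1}a_kz^k$ satisfies the $\delta$-condition and $\Omega(f)$ is simply connected, then $|a_{0}|<2^{\frac{1}{m-1}}+\epsilon$.
   Context: A monic polynomial $f(z)=z^{m}+\sum_{k=0}^{m-1}a_{k}z^{k}$ satisfies the $\delta$-condition if $|a_{k}|<\delta$ for all $1\le k\le m-1$ (no condition on $a_0$). $\Omega(f)=\{z\in\hat{\mathbb{C}}: f^{n}(z)\to\infty \text{ as } n\to+\infty\}$, where $f^n$ is the $n$-th iterate. *)

theory Defs
  imports "HOL-Analysis.Analysis"
begin

definition monic_poly :: "nat \<Rightarrow> (nat \<Rightarrow> complex) \<Rightarrow> complex \<Rightarrow> complex" where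
  "monic_poly m a z = z ^ m + (\<Sum>k<m. a k * z ^ k)"

definition delta_condition :: "nat \<Rightarrow> real \<Rightarrow> (nat \<Rightarrow> complex) \<Rightarrow> bool" where
  "delta_condition m \<delta> a \<longleftrightarrow> (\<forall>k. 1 \<le> k \<and> k \<le> m - 1 \<longrightarrow> norm (a k) < \<delta>)"

text \<open>Riemann sphere modelled as the unit sphere in complex x real (= R^3);
  stereographic embedding of the finite plane; infinity is the north pole (0,1).\<close>
definition stereo :: "complex \<Rightarrow> complex \<times> real" where
  "stereo z = (of_real (2 / (1 + (norm z)\<^sup>2)) * z, ((norm z)\<^sup>2 - 1) / ((norm z)\<^sup>2 + 1))"

definition north_pole :: "complex \<times> real" where
  "north_pole = (0, 1)"

definition escaping_set :: "(complex \<Rightarrow> complex) \<Rightarrow> complex set" where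
  "escaping_set f = {z. filterlim (\<lambda>n. (f ^^ n) z) at_infinity sequentially}"

text \<open>Omega(f) as a subset of the Riemann sphere (infinity is fixed by a polynomial,
  so it belongs to Omega(f)).\<close>
definition Omega :: "(complex \<Rightarrow> complex) \<Rightarrow> (complex \<times> real) set" where
  "Omega f = insert north_pole (stereo ` escaping_set f)"

end

theory Submission
  imports Defs "HOL-Complex_Analysis.Complex_Analysis"
begin

lemma npos: "(norm (z::complex))\<^sup>2 + 1 > 0" "1 + (norm (z::complex))\<^sup>2 > 0"
  by (smt (verit) zero_le_power2)+

lemma stereo_snd_lt: "snd (stereo z) < 1"
  using npos[of z] by (simp add: stereo_def divide_less_eq)

lemma stereo_ne_N: "stereo z \<noteq> north_pole"
  using stereo_snd_lt[of z] by (auto simp: north_pole_def)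

lemma stereo_inv: "fst (stereo z) / complex_of_real (1 - snd (stereo z)) = z"
proof -
  have h: "(norm z)\<^sup>2 + 1 > 0" "1 + (norm z)\<^sup>2 > 0" using npos by auto
  have 1: "1 - snd (stereo z) = 2 / (1 + (norm z)\<^sup>2)"
    using h by (simp add: stereo_def field_simps)
  have 2: "fst (stereo z) = complex_of_real (2 / (1 + (norm z)\<^sup>2)) * z"
    by (simp add: stereo_def)
  have "2 / (1 + (norm z)\<^sup>2) \<noteq> 0" using h by simp
  then have 3: "complex_of_real (2 / (1 + (norm z)\<^sup>2)) \<noteq> 0" by (simp only: of_real_eq_0_iff) simp
  show ?thesis unfolding 1 2 using 3 by simp
qed

lemma continuous_stereo: "continuous_on UNIV stereo"
  unfolding stereo_def
  by (intro continuous_intros) (auto simp del: of_real_add, (metis npos less_irrefl)+)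

lemma dist_N_stereo: "dist (stereo z) north_pole \<ge> 2 / ((norm z)\<^sup>2 + 1)"
proof -
  have h: "(norm z)\<^sup>2 + 1 > 0" using npos by auto
  have "dist (snd (stereo z)) (snd north_pole) \<le> dist (stereo z) north_pole"
    by (rule dist_snd_le)
  moreover have "dist (snd (stereo z)) (snd north_pole) = 2 / ((norm z)\<^sup>2 + 1)"
    using h by (simp add: stereo_def north_pole_def dist_real_def field_simps)
  ultimately show ?thesis by simp
qed

lemma omega_cases: "x \<in> Omega f \<Longrightarrow> x = north_pole \<or> (\<exists>z\<in>escaping_set f. x = stereo z)"
  by (auto simp: Omega_def)

lemma topo_main:
  fixes f :: "complex \<Rightarrow> complex" and \<gamma> :: "real \<Rightarrow> complex"
  assumes SC: "simply_connected (Omega f)"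
    and pg: "path \<gamma>" and lp: "pathfinish \<gamma> = pathstart \<gamma>"
    and im: "path_image \<gamma> \<subseteq> escaping_set f"
    and q: "q \<notin> escaping_set f" and p: "p \<notin> escaping_set f"
    and seg: "\<And>t. t \<in> {0..1} \<Longrightarrow> p \<notin> closed_segment q (\<gamma> t)"
  shows "winding_number \<gamma> q = 0"
proof -
  define E where "E = escaping_set f"
  define \<Omega> where "\<Omega> = Omega f"
  define N where "N = north_pole"
  have pq: "p \<noteq> q"
  proof
    assume "p = q"
    moreover have "0 \<in> {0..1::real}" by simp
    ultimately show False using seg[of 0] by auto
  qed
  define g where "g x = (if x = N then q - p else
     ((fst x / complex_of_real (1 - snd x) - q) * (q - p) / (fst x / complex_of_real (1 - snd x) - p)))" for x
  have g_st: "g (stereo z) = (z - q) * (q - p) / (z - p)" for z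
    using stereo_ne_N[of z] stereo_inv[of z] by (simp add: g_def N_def)
  have gN: "g N = q - p" by (simp add: g_def)
  have NO: "N \<in> \<Omega>" by (simp add: \<Omega>_def Omega_def N_def)
  have gmap: "g \<in> \<Omega> \<rightarrow> -{0}"
  proof
    fix x assume "x \<in> \<Omega>"
    then consider "x = N" | z where "z \<in> E" "x = stereo z"
      unfolding \<Omega>_def E_def N_def using omega_cases by blast
    then show "g x \<in> -{0}"
    proof cases
      case 1 then show ?thesis using gN pq by auto
    next
      case 2
      then have "z \<noteq> q" "z \<noteq> p" using p q E_def by auto
      then show ?thesis using 2 pq by (simp add: g_st)
    qed
  qed
  have gcont: "continuous_on \<Omega> g"
  proof -
    have "continuous (at x within \<Omega>) g" if x: "x \<in> \<Omega>" for x
    proof -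
      consider "x = N" | z where "z \<in> E" "x = stereo z"
        using x unfolding \<Omega>_def E_def N_def using omega_cases by blast
      then show ?thesis
      proof cases
        case 1
        show ?thesis unfolding continuous_within_eps_delta
        proof (intro allI impI)
          fix e :: real assume e: "e > 0"
          define M where "M = norm p + (norm (q - p))\<^sup>2 / e + 1"
          have M1: "M \<ge> 1" using e by (simp add: M_def)
          have Mp: "M\<^sup>2 + 1 > 0" by (rule add_nonneg_pos) simp_all
          define d where "d = 2 / (M\<^sup>2 + 1)"
          have d: "d > 0" using Mp by (simp add: d_def)
          show "\<exists>d>0. \<forall>x'\<in>\<Omega>. dist x' x < d \<longrightarrow> dist (g x') (g x) < e"
          proof (intro exI conjI ballI impI)
            show "d > 0" by (fact d)
            fix x' assume x': "x' \<in> \<Omega>" and dx: "dist x' x < d"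
            consider "x' = N" | w where "w \<in> E" "x' = stereo w"
              using x' unfolding \<Omega>_def E_def N_def using omega_cases by blast
            then show "dist (g x') (g x) < e"
            proof cases
              case 1 then show ?thesis using \<open>x = N\<close> e by simp
            next
              case 2
              have "2 / ((norm w)\<^sup>2 + 1) < 2 / (M\<^sup>2 + 1)"
                using dist_N_stereo[of w] dx 2 \<open>x = N\<close> by (simp add: d_def N_def)
              then have "M\<^sup>2 + 1 < (norm w)\<^sup>2 + 1"
                using npos[of w] Mp by (smt (verit) frac_le)
              then have "M < norm w" using M1
                by (smt (verit) power_mono norm_ge_zero)
              then have wp: "norm (w - p) > (norm (q - p))\<^sup>2 / e"
                using norm_triangle_ineq2[of w p] by (simp add: M_def)
              have wp0: "norm (w - p) > 0"
                using wp e by (smt (verit) divide_nonneg_pos zero_le_power2)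
              have "g x' - g x = (q - p) * (p - q) / (w - p)"
                using 2 \<open>x = N\<close> wp0 by (simp add: g_st gN field_simps)
              then have "dist (g x') (g x) = (norm (q - p))\<^sup>2 / norm (w - p)"
                by (simp add: dist_norm norm_mult norm_divide power2_eq_square norm_minus_commute)
              also have "\<dots> < e"
                using wp wp0 e by (simp add: divide_less_eq mult.commute pos_divide_less_eq)
              finally show ?thesis .
            qed
          qed
        qed
      next
        case 2
        define h where "h y = ((fst y / complex_of_real (1 - snd y) - q) * (q - p) / (fst y / complex_of_real (1 - snd y) - p))" for y
        have zp: "z \<noteq> p" using 2 p E_def by auto
        have s1: "1 - snd x \<noteq> 0" using stereo_snd_lt[of z] 2 by simp
        have "continuous (at x within \<Omega>) h"
          unfolding h_def
          using s1 zp stereo_inv[of z] 2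
          by (intro continuous_intros) auto
        moreover have "dist x N > 0" using 2 stereo_ne_N[of z] N_def by simp
        ultimately show ?thesis
        proof (rule continuous_transform_within)
          show "x \<in> \<Omega>" by (fact x)
          fix x' assume "x' \<in> \<Omega>" "dist x' x < dist x N"
          then have "x' \<noteq> N" by (auto simp: dist_commute)
          then show "h x' = g x'" by (simp add: g_def h_def)
        qed
      qed
    qed
    then show ?thesis by (simp add: continuous_on_eq_continuous_within)
  qed
  define \<Gamma> where "\<Gamma> = stereo \<circ> \<gamma>"
  have pG: "path \<Gamma>" unfolding \<Gamma>_def
    by (rule path_continuous_image[OF pg]) (rule continuous_on_subset[OF continuous_stereo], simp)
  have lG: "pathfinish \<Gamma> = pathstart \<Gamma>" using lp by (simp add: \<Gamma>_def pathfinish_def pathstart_def)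
  have iG: "path_image \<Gamma> \<subseteq> \<Omega>" using im
    by (auto simp: \<Gamma>_def path_image_compose \<Omega>_def Omega_def)
  have H1: "homotopic_loops \<Omega> \<Gamma> (linepath N N)"
    using SC pG lG iG NO unfolding \<Omega>_def simply_connected_eq_contractible_loop_any by blast
  have H2: "homotopic_loops (-{0}) (g \<circ> \<Gamma>) (g \<circ> linepath N N)"
    by (rule homotopic_loops_continuous_image[OF H1 gcont gmap])
  have e1: "g \<circ> linepath N N = linepath (q - p) (q - p)"
    by (simp add: linepath_refl gN o_def)
  have e2: "g \<circ> \<Gamma> = (\<lambda>t. (\<gamma> t - q) * (q - p) / (\<gamma> t - p))"
    by (simp add: \<Gamma>_def o_def g_st)
  have gne: "\<gamma> t \<noteq> p" "\<gamma> t \<noteq> q" if "t \<in> {0..1}" for t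
    using im that p q unfolding path_image_def by (metis image_subset_iff)+
  have H3: "homotopic_loops (-{0}) (\<lambda>t. (\<gamma> t - q) * (q - p) / (\<gamma> t - p)) (\<lambda>t. \<gamma> t - q)"
  proof (rule homotopic_loops_linear)
    show "path (\<lambda>t. (\<gamma> t - q) * (q - p) / (\<gamma> t - p))"
      using homotopic_loops_imp_path[OF H2] e2 by simp
    show "pathfinish (\<lambda>t. (\<gamma> t - q) * (q - p) / (\<gamma> t - p)) = pathstart (\<lambda>t. (\<gamma> t - q) * (q - p) / (\<gamma> t - p))"
      using lp by (simp add: pathfinish_def pathstart_def)
    show "path (\<lambda>t. \<gamma> t - q)" using pg by (intro path_diff path_const) auto
    show "pathfinish (\<lambda>t. \<gamma> t - q) = pathstart (\<lambda>t. \<gamma> t - q)"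
      using lp by (simp add: pathfinish_def pathstart_def)
    fix t :: real assume t: "t \<in> {0..1}"
    show "closed_segment ((\<gamma> t - q) * (q - p) / (\<gamma> t - p)) (\<gamma> t - q) \<subseteq> - {0}"
    proof
      fix y assume "y \<in> closed_segment ((\<gamma> t - q) * (q - p) / (\<gamma> t - p)) (\<gamma> t - q)"
      then obtain u :: real where u: "0 \<le> u" "u \<le> 1"
        and y: "y = (1 - u) *\<^sub>R ((\<gamma> t - q) * (q - p) / (\<gamma> t - p)) + u *\<^sub>R (\<gamma> t - q)"
        unfolding closed_segment_def by auto
      have "(1 - u) *\<^sub>R q + u *\<^sub>R \<gamma> t \<in> closed_segment q (\<gamma> t)"
        using u unfolding closed_segment_def by auto
      then have ne: "(1 - u) *\<^sub>R q + u *\<^sub>R \<gamma> t - p \<noteq> 0" using seg[OF t] by auto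
      have "y = (\<gamma> t - q) * ((1 - u) *\<^sub>R q + u *\<^sub>R \<gamma> t - p) / (\<gamma> t - p)"
        using gne[OF t] unfolding y scaleR_conv_of_real by (simp add: field_simps)
      then show "y \<in> -{0}" using gne[OF t] ne by simp
    qed
  qed
  have H4: "homotopic_loops (-{0}) (\<lambda>t. \<gamma> t - q) (linepath (q - p) (q - p))"
    using homotopic_loops_trans[OF homotopic_loops_sym[OF H3[folded e2]] H2] e1 by simp
  have "winding_number \<gamma> q = winding_number (\<lambda>t. \<gamma> t - q) 0"
    by (rule winding_number_offset)
  also have "\<dots> = winding_number (linepath (q - p) (q - p)) 0"
    by (rule winding_number_homotopic_loops[OF H4])
  also have "\<dots> = 0" using pq by simp
  finally show ?thesis .
qed

lemma pow_diff_ge: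
  fixes x y :: real
  assumes "1 \<le> y" "y \<le> x" "1 \<le> n"
  shows "x ^ n - y ^ n \<ge> x - y"
  using assms(3)
proof (induction n rule: dec_induct)
  case base then show ?case by simp
next
  case (step n)
  have "x ^ Suc n - y ^ Suc n = x * (x ^ n - y ^ n) + y ^ n * (x - y)"
    by (simp add: algebra_simps)
  also have "\<dots> \<ge> 1 * (x - y) + 1 * (x - y) - (x - y)"
  proof -
    have "x * (x ^ n - y ^ n) \<ge> 1 * (x - y)"
      using step assms by (intro mult_mono) auto
    moreover have "y ^ n * (x - y) \<ge> 1 * (x - y)"
      using assms by (intro mult_right_mono) (auto simp: one_le_power)
    ultimately show ?thesis using assms by linarith
  qed
  finally show ?case by simp
qed

lemma esc_pre: "f z \<in> escaping_set f \<Longrightarrow> z \<in> escaping_set f"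
proof -
  assume "f z \<in> escaping_set f"
  then have "filterlim (\<lambda>n. (f ^^ n) (f z)) at_infinity sequentially"
    by (simp add: escaping_set_def)
  moreover have "(f ^^ n) (f z) = (f ^^ Suc n) z" for n
    by (metis comp_apply funpow_Suc_right)
  ultimately have "filterlim (\<lambda>n. (f ^^ Suc n) z) at_infinity sequentially" by simp
  then have "filterlim (\<lambda>n. (f ^^ n) z) at_infinity sequentially"
    by (rule filterlim_sequentially_Suc[THEN iffD1])
  then show ?thesis by (simp add: escaping_set_def)
qed

lemma fixed_not_esc: "f q = q \<Longrightarrow> q \<notin> escaping_set f"
proof
  assume fq: "f q = q" and "q \<in> escaping_set f"
  then have lim: "filterlim (\<lambda>n. (f ^^ n) q) at_infinity sequentially"
    by (simp add: escaping_set_def)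
  have "(f ^^ n) q = q" for n by (induction n) (simp_all add: fq)
  then have "filterlim (\<lambda>n. q) at_infinity sequentially" using lim by simp
  then have "\<forall>r>0. r \<le> norm q"
    by (simp add: filterlim_at_infinity[OF order_refl])
  from this[rule_format, of "norm q + 1"] show False
    by (smt (verit) norm_ge_zero)
qed

locale dyn =
  fixes m :: nat and f :: "complex \<Rightarrow> complex" and c :: complex and C s e D :: real
  assumes m3: "m \<ge> 3"
  and fcont: "continuous_on UNIV f"
  and PB: "\<And>z. norm (f z - z^m - c) \<le> D * (1 + norm z ^ (m-1))"
  and Cdef: "C = norm c"
  and s1: "1 \<le> s" and s2: "s^(m-1) = 2"
  and e0: "0 < e" and e1: "e \<le> 1"
  and Cge: "s + e \<le> C"
  and D0: "0 \<le> D" and Dsmall: "D * (1 + 4^(m-1)) \<le> e/24"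
begin

lemma Dle: "D \<le> e / 48"
proof -
  have "(1::real) \<le> 4^(m-1)" by (simp add: one_le_power)
  then have "D * 2 \<le> D * (1 + 4^(m-1))" using D0 by (intro mult_left_mono) auto
  then show ?thesis using Dsmall by linarith
qed

lemma fz_lower: "norm (f z) \<ge> norm (z^m + c) - D * (1 + norm z ^ (m-1))"
proof -
  have "z^m + c = f z - (f z - z^m - c)" by simp
  then have "norm (z^m + c) \<le> norm (f z) + norm (f z - z^m - c)"
    using norm_triangle_ineq4[of "f z" "f z - z^m - c"] by simp
  then show ?thesis using PB[of z] by linarith
qed

end

context dyn begin

lemma m1: "1 \<le> m - 1" using m3 by simp

lemma C1: "1 \<le> C" using s1 e0 Cge by linarith

lemma esc_step:
  assumes r: "norm z \<ge> C - e/8"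
  shows "norm (f z) \<ge> (1 + e/8) * norm z"
proof -
  define r where "r = norm z"
  define X where "X = r^(m-1)"
  have rs: "r \<ge> s + e/2" using r Cge e0 by (simp add: r_def)
  have r1: "r \<ge> 1" using rs s1 e0 by linarith
  have "X - s^(m-1) \<ge> r - s" unfolding X_def
    using pow_diff_ge[OF s1 _ m1, of r] rs e0 by linarith
  then have X: "X \<ge> 2 + e/2" using s2 rs by linarith
  have rm: "r^m = r * X"
    using m3 by (simp add: X_def power_Suc[symmetric])
  have X1: "1 \<le> X" using X e0 by linarith
  have "norm (z^m + c) \<ge> norm (z^m) - norm c" using norm_triangle_ineq2[of "z^m" "-c"] by simp
  then have "norm (z^m + c) \<ge> r^m - C" by (simp add: r_def Cdef norm_power)
  then have fz: "norm (f z) \<ge> r * X - C - D * (1 + X)"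
    using fz_lower[of z] rm by (simp add: r_def X_def)
  have "D * 1 \<le> D * X" using X1 D0 by (rule mult_left_mono)
  then have DX: "D * (1 + X) \<le> 2 * D * X" by (simp add: algebra_simps)
  have Dl: "D \<le> e/48" by (rule Dle)
  have "X * (r - 2 * D) \<ge> (2 + e/2) * (r - 2 * D)"
    using X r1 Dl e1 by (intro mult_right_mono) auto
  then have "r * X - 2 * D * X \<ge> 2 * r + e * r / 2 - 4 * D - e * D"
    by (simp add: algebra_simps)
  moreover have "e * D \<le> 1 * D" using e1 D0 by (rule mult_right_mono)
  moreover have "e * r \<ge> e" using r1 e0 by simp
  moreover have "C \<le> r + e/8" using r by (simp add: r_def)
  ultimately have "r * X - C - D * (1 + X) \<ge> (1 + e/8) * r"
    using DX Dl e0 by (simp only: distrib_left distrib_right mult_1_right)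
  then show ?thesis using fz by (simp add: r_def)
qed

lemma esc_big:
  assumes r: "norm z \<ge> C - e/8"
  shows "z \<in> escaping_set f"
proof -
  define lam where "lam = 1 + e/8"
  have l1: "lam > 1" using e0 by (simp add: lam_def)
  have z1: "norm z \<ge> 1" using r C1 Cge s1 e1 e0 by linarith
  have it: "norm ((f ^^ n) z) \<ge> lam^n * norm z" for n
  proof (induction n)
    case 0 then show ?case by simp
  next
    case (Suc n)
    have "lam^n \<ge> 1" using l1 by (simp add: one_le_power)
    then have "lam^n * norm z \<ge> 1 * norm z" by (intro mult_right_mono) auto
    then have "norm ((f ^^ n) z) \<ge> C - e/8" using Suc r by linarith
    then have "norm (f ((f ^^ n) z)) \<ge> lam * norm ((f ^^ n) z)"
      using esc_step lam_def by blast
    also have "lam * norm ((f ^^ n) z) \<ge> lam * (lam^n * norm z)"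
      using Suc l1 by (intro mult_left_mono) auto
    finally show ?case by (simp add: mult.assoc)
  qed
  have "filterlim (\<lambda>n. (f ^^ n) z) at_infinity sequentially"
    unfolding filterlim_at_infinity[OF order_refl]
  proof (intro allI impI)
    fix R :: real assume "R > 0"
    obtain N where N: "R < lam^N" using real_arch_pow[OF l1] by blast
    show "\<forall>\<^sub>F n in sequentially. R \<le> norm ((f ^^ n) z)"
    proof (rule eventually_sequentiallyI[of N])
      fix n assume "N \<le> n"
      then have "lam^N \<le> lam^n" using l1 by (intro power_increasing) auto
      also have "\<dots> \<le> lam^n * norm z" using mult_left_mono[of 1 "norm z" "lam^n"] z1 l1
        by simp
      finally show "R \<le> norm ((f ^^ n) z)" using N it[of n] by linarith
    qed
  qed
  then show ?thesis by (simp add: escaping_set_def)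
qed

lemma gap:
  assumes zl: "z^m = complex_of_real l * c" and l: "l \<ge> 0"
  shows "z \<in> escaping_set f"
proof -
  define r where "r = norm z"
  have "z^m + c = complex_of_real (l+1) * c" by (simp add: zl algebra_simps)
  then have "norm (z^m + c) = (l + 1) * C"
    using l by (simp add: Cdef norm_mult)
  moreover have "r^m = l * C" using zl l by (simp add: r_def Cdef norm_mult flip: norm_power)
  ultimately have fz: "norm (f z) \<ge> C + r^m - D * (1 + r^(m-1))"
    using fz_lower[of z] by (simp add: r_def algebra_simps)
  have "D * (1 + r^(m-1)) \<le> r^m + e/8"
  proof (cases "r \<le> 1")
    case True
    then have "r^(m-1) \<le> 1" by (simp add: r_def power_le_one)
    then have "D * (1 + r^(m-1)) \<le> D * 2" using D0 by (intro mult_left_mono) auto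
    moreover have "r^m \<ge> 0" by (simp add: r_def)
    ultimately show ?thesis using Dle e0 by linarith
  next
    case False
    then have "r^(m-1) \<le> r^m" by (intro power_increasing) auto
    moreover have "1 \<le> r^(m-1)" using False by (simp add: one_le_power)
    ultimately have "D * (1 + r^(m-1)) \<le> D * (2 * r^m)" using D0 by (intro mult_left_mono) auto
    moreover have "D * 2 \<le> 1" using Dle e1 by linarith
    moreover have "r^m \<ge> 0" by (simp add: r_def)
    moreover have "D * (2 * r^m) = (D * 2) * r^m" by simp
    moreover have "(D * 2) * r^m \<le> 1 * r^m" using \<open>D * 2 \<le> 1\<close> \<open>r^m \<ge> 0\<close> by (intro mult_right_mono) auto
    ultimately show ?thesis using e0 by linarith
  qed
  then have "norm (f z) \<ge> C - e/8" using fz by linarith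
  then have "f z \<in> escaping_set f" by (rule esc_big)
  then show ?thesis by (rule esc_pre)
qed

end

context dyn begin

lemma rho_exists:
  "\<exists>\<rho>>0. \<rho> + D * (1 + \<rho>^(m-1)) < C \<and> \<rho> + C + D * (1 + \<rho>^(m-1)) \<le> \<rho>^m"
proof (cases "C \<le> 4")
  case True
  define \<rho> where "\<rho> = C - e/4"
  have rs: "\<rho> \<ge> s + 3*e/4" using Cge by (simp add: \<rho>_def)
  have r1: "\<rho> \<ge> 1" using rs s1 e0 by linarith
  have r4: "\<rho> \<le> 4" using True e0 by (simp add: \<rho>_def)
  have "\<rho>^(m-1) \<le> 4^(m-1)" using r1 r4 by (intro power_mono) auto
  then have "D * (1 + \<rho>^(m-1)) \<le> D * (1 + 4^(m-1))" using D0 by (intro mult_left_mono) auto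
  then have small: "D * (1 + \<rho>^(m-1)) \<le> e/24" using Dsmall by linarith
  have "\<rho>^(m-1) - s^(m-1) \<ge> \<rho> - s"
    using pow_diff_ge[OF s1 _ m1, of \<rho>] rs e0 by linarith
  then have X: "\<rho>^(m-1) \<ge> 2 + 3*e/4" using s2 rs by linarith
  have rm: "\<rho>^m = \<rho> * \<rho>^(m-1)"
    using m3 by (simp add: power_Suc[symmetric])
  have "\<rho> * \<rho>^(m-1) \<ge> \<rho> * (2 + 3*e/4)" using X r1 by (intro mult_left_mono) auto
  moreover have "\<rho> * (3*e/4) \<ge> 1 * (3*e/4)" using r1 e0 by (intro mult_right_mono) auto
  ultimately have "\<rho>^m \<ge> 2 * \<rho> + 3*e/4" using rm by (simp add: algebra_simps)
  then have "\<rho> + C + D * (1 + \<rho>^(m-1)) \<le> \<rho>^m" using small e0 \<rho>_def by linarith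
  moreover have "\<rho> + D * (1 + \<rho>^(m-1)) < C" using small e0 \<rho>_def by linarith
  moreover have "\<rho> > 0" using r1 by simp
  ultimately show ?thesis by blast
next
  case False
  define \<rho> where "\<rho> = root (m-1) (2*C)"
  have mpos: "0 < m - 1" using m3 by simp
  have rp: "\<rho>^(m-1) = 2*C" using real_root_pow_pos2[OF mpos, of "2*C"] C1 by (simp add: \<rho>_def)
  have r0: "\<rho> > 0" unfolding \<rho>_def by (rule real_root_gt_zero) (use mpos C1 in auto)
  have r1: "\<rho> \<ge> 1"
  proof (rule ccontr)
    assume "\<not> \<rho> \<ge> 1"
    then have "\<rho>^(m-1) < 1" using r0 mpos by (simp add: power_less_one_iff)
    then show False using rp C1 by simp
  qed
  have rle: "\<rho> \<le> C/2 + 1"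
  proof (rule ccontr)
    assume "\<not> \<rho> \<le> C/2 + 1"
    then have lt: "C/2 + 1 < \<rho>" by simp
    have "\<rho>^2 \<le> \<rho>^(m-1)" using r1 m3 by (intro power_increasing) auto
    moreover have "(C/2+1)^2 < \<rho>^2" using lt C1 by (intro power_strict_mono) auto
    moreover have "(C/2+1)^2 \<ge> 2*C"
    proof -
      have "(C/2+1)^2 - 2*C = (C/2 - 1)^2" by (simp add: power2_eq_square algebra_simps)
      then show ?thesis by (smt (verit) zero_le_power2)
    qed
    ultimately show False using rp by linarith
  qed
  have D1: "D \<le> 1/48" using Dle e1 by linarith
  have "D * (1 + 2*C) \<le> (1/48) * (1 + 2*C)" using D1 C1 by (intro mult_right_mono) auto
  then have small: "D * (1 + \<rho>^(m-1)) \<le> (1 + 2*C)/48" using rp by simp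
  have "\<rho>^m = \<rho> * \<rho>^(m-1)"
    using m3 by (simp add: power_Suc[symmetric])
  then have rm: "\<rho>^m = \<rho> * (2*C)" using rp by simp
  have "\<rho> * (2*C - 1) \<ge> 1 * (2*C - 1)" using r1 C1 by (intro mult_right_mono) auto
  then have "\<rho>^m \<ge> \<rho> + 2*C - 1" using rm by (simp add: algebra_simps)
  moreover have "C - 1 \<ge> (1 + 2*C)/48" using False by (simp add: field_simps)
  ultimately have "\<rho> + C + D * (1 + \<rho>^(m-1)) \<le> \<rho>^m" using small by linarith
  moreover have "C/2 + 1 + (1 + 2*C)/48 < C" using False by (simp add: field_simps)
  then have "\<rho> + D * (1 + \<rho>^(m-1)) < C" using small rle by linarith
  ultimately show ?thesis using r0 by blast
qed

lemma cne: "c \<noteq> 0" using C1 Cdef by auto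

lemma fixpt:
  assumes beta: "\<beta>^m = - c / complex_of_real C"
  shows "\<exists>q L. f q = q \<and> q = \<beta> * exp (L / of_nat m) \<and> \<bar>Im L\<bar> < pi/2 \<and> norm q < C"
proof -
  obtain \<rho> where r0: "\<rho> > 0" and r2: "\<rho> + D * (1 + \<rho>^(m-1)) < C"
    and r3: "\<rho> + C + D * (1 + \<rho>^(m-1)) \<le> \<rho>^m"
    using rho_exists by blast
  have Cpos: "C > 0" using C1 by simp
  have bm0: "\<beta>^m \<noteq> 0" using beta cne Cpos by simp
  define Q where "Q z = f z - z^m - c" for z
  define u where "u z = z + z^m - f z" for z
  define v where "v z = u z / \<beta>^m" for z
  define \<Phi> where "\<Phi> z = \<beta> * exp (Ln (v z) / of_nat m)" for z
  have nb: "norm \<beta> = 1"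
  proof -
    have "norm (\<beta> ^ m) = norm c / norm c" using beta Cpos by (simp add: norm_divide Cdef)
    then have "norm \<beta> ^ m = 1" using cne by (simp add: norm_power)
    then show ?thesis using m3 power_eq_1_iff[of "norm \<beta>" m] by fastforce
  qed
  have Qb: "norm (Q z) \<le> D * (1 + \<rho>^(m-1))" if "norm z \<le> \<rho>" for z
  proof -
    have "norm z ^ (m-1) \<le> \<rho>^(m-1)" using that by (intro power_mono) auto
    then have "D * (1 + norm z ^ (m-1)) \<le> D * (1 + \<rho>^(m-1))" using D0 by (intro mult_left_mono) auto
    then show ?thesis using PB[of z] by (simp add: Q_def)
  qed
  have uQ: "u z = z - c - Q z" for z by (simp add: u_def Q_def)
  have vform: "v z = complex_of_real C - (z - Q z) * complex_of_real C / c" for z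
  proof -
    define w where "w = z - Q z"
    define K where "K = complex_of_real C"
    have K0: "K \<noteq> 0" using Cpos by (simp add: K_def)
    have uw: "u z = w - c" unfolding uQ w_def by (simp add: algebra_simps)
    have "v z = (w - c) / (- c / K)" unfolding v_def uw beta K_def by (simp only: minus_divide_left)
    also have "\<dots> = K - w * K / c" using cne K0 by (simp add: field_simps)
    finally show ?thesis unfolding w_def K_def .
  qed
  have vRe: "Re (v z) > 0" if "norm z \<le> \<rho>" for z
  proof -
    have nzq: "norm (z - Q z) < C" using Qb[OF that] that r2 norm_triangle_ineq4[of z "Q z"] by linarith
    have "norm ((z - Q z) * complex_of_real C / c) = norm (z - Q z)"
      using cne Cpos by (simp add: norm_mult norm_divide Cdef)
    then have "Re ((z - Q z) * complex_of_real C / c) < C"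
      using nzq complex_Re_le_cmod[of "(z - Q z) * complex_of_real C / c"] by linarith
    then show ?thesis by (simp add: vform)
  qed
  have vnorm: "norm (v z) \<le> \<rho>^m" if "norm z \<le> \<rho>" for z
  proof -
    have "norm (v z) = norm (u z)" using nb by (simp add: v_def norm_divide norm_power)
    also have "\<dots> \<le> norm (z - c) + norm (Q z)" unfolding uQ by (rule norm_triangle_ineq4)
    also have "\<dots> \<le> norm z + norm c + norm (Q z)" using norm_triangle_ineq4[of z c] by simp
    also have "\<dots> \<le> \<rho>^m" using Qb[OF that] that r3 Cdef by linarith
    finally show ?thesis .
  qed
  have vcont: "continuous_on UNIV v"
    unfolding v_def u_def using bm0 by (intro continuous_intros fcont[THEN continuous_on_subset]) auto
  have Phicont: "continuous_on (cball 0 \<rho>) \<Phi>"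
    unfolding \<Phi>_def
  proof (intro continuous_intros continuous_on_Ln)
    show "continuous_on (cball 0 \<rho>) v" using vcont by (rule continuous_on_subset) auto
    fix z assume "z \<in> cball (0::complex) \<rho>"
    then have "Re (v z) > 0" using vRe by simp
    then show "v z \<notin> \<real>\<^sub>\<le>\<^sub>0" by (auto simp: complex_nonpos_Reals_iff)
  qed (use m3 in auto)
  have expm: "exp (Ln w / of_nat m) ^ m = w" if "w \<noteq> 0" for w
  proof -
    have "exp (Ln w / of_nat m) ^ m = exp (of_nat m * (Ln w / of_nat m))"
      by (rule exp_of_nat_mult[symmetric])
    also have "\<dots> = w" using m3 that by simp
    finally show ?thesis .
  qed
  have vne: "v z \<noteq> 0" if "norm z \<le> \<rho>" for z using vRe[OF that] by auto
  have Phimap: "\<Phi> \<in> cball 0 \<rho> \<rightarrow> cball 0 \<rho>"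
  proof
    fix z assume "z \<in> cball (0::complex) \<rho>"
    then have z: "norm z \<le> \<rho>" by simp
    have "norm (\<Phi> z) ^ m = norm (exp (Ln (v z) / of_nat m) ^ m)"
      using nb by (simp add: \<Phi>_def norm_mult norm_power)
    also have "\<dots> = norm (v z)" using expm[OF vne[OF z]] by simp
    also have "\<dots> \<le> \<rho>^m" by (rule vnorm[OF z])
    finally have "norm (\<Phi> z) ^ Suc (m - 1) \<le> \<rho> ^ Suc (m - 1)" using m3 by simp
    then have "norm (\<Phi> z) \<le> \<rho>" by (rule power_le_imp_le_base) (use r0 in simp)
    then show "\<Phi> z \<in> cball 0 \<rho>" by simp
  qed
  obtain q where qin: "q \<in> cball 0 \<rho>" and qfix: "\<Phi> q = q"
    by (rule brouwer_ball[OF r0 Phicont Phimap])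
  have qn: "norm q \<le> \<rho>" using qin by simp
  have qeq: "q = \<beta> * exp (Ln (v q) / of_nat m)" using qfix by (simp add: \<Phi>_def)
  have "q^m = (\<beta> * exp (Ln (v q) / of_nat m))^m" by (rule arg_cong[where f="\<lambda>x. x^m", OF qeq])
  also have "\<dots> = \<beta>^m * exp (Ln (v q) / of_nat m) ^ m" by (rule power_mult_distrib)
  also have "\<dots> = \<beta>^m * v q" using expm[OF vne[OF qn]] by simp
  also have "\<dots> = u q" using bm0 by (simp add: v_def)
  finally have "f q = q" by (simp add: u_def)
  moreover have "\<bar>Im (Ln (v q))\<bar> < pi/2" using vRe[OF qn] by (rule Re_Ln_pos_lt_imp)
  moreover have "D * (1 + \<rho>^(m-1)) \<ge> 0" using D0 r0 by simp
  then have "norm q < C" using qn r2 by linarith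
  ultimately show ?thesis using qeq by blast
qed

end

lemma theta_facts:
  assumes m3: "m \<ge> (3::nat)"
  shows "0 < pi / real m" "pi / real m \<le> pi / 3" "0 < sin (2 * (pi / real m))"
    "0 < cos (pi / real m)"
proof -
  have m0: "real m \<ge> 3" using m3 by simp
  define t where "t = pi / real m"
  have t0: "0 < t" using m0 by (simp add: t_def)
  have t3: "t \<le> pi / 3" unfolding t_def by (rule divide_left_mono) (use m0 in auto)
  have "0 < sin (2 * t)"
    by (rule sin_gt_zero) (use t0 t3 pi_gt_zero in linarith)+
  moreover have "0 < cos t"
    by (rule cos_gt_zero_pi) (use t0 t3 pi_gt_zero in linarith)+
  ultimately show "0 < pi / real m" "pi / real m \<le> pi / 3" "0 < sin (2 * (pi / real m))"
    "0 < cos (pi / real m)" using t0 t3 by (simp_all add: t_def)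
qed

lemma exp_polar_m:
  "exp (L / of_nat m) = complex_of_real (exp (Re L / real m)) * cis (Im L / real m)"
  by (simp add: exp_eq_polar)

lemma geo_inside:
  fixes \<beta> L :: complex and C R \<theta> :: real
  assumes m3: "m \<ge> 3" and th: "\<theta> = pi / real m" and nb: "norm \<beta> = 1" and C0: "C > 0"
    and R: "R = C / cos \<theta>"
    and L: "\<bar>Im L\<bar> < pi/2" and xC: "norm (exp (L / of_nat m)) < C"
  shows "\<beta> * exp (L / of_nat m) \<in> interior (convex hull {0, of_real R * \<beta> * cis (-\<theta>), of_real R * \<beta> * cis \<theta>})"
proof -
  define x where "x = exp (L / of_nat m)"
  define \<phi> where "\<phi> = Im L / real m"
  define l where "l = exp (Re L / real m)"
  have x: "x = of_real l * cis \<phi>" by (simp add: x_def l_def \<phi>_def exp_polar_m)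
  have l0: "l > 0" by (simp add: l_def)
  have t0: "0 < \<theta>" and t3: "\<theta> \<le> pi/3" and s2: "0 < sin (2*\<theta>)" and c0: "0 < cos \<theta>"
    using theta_facts[OF m3] th by auto
  have mpos: "real m > 0" using m3 by simp
  have phi: "\<bar>\<phi>\<bar> < \<theta>/2"
  proof -
    have "\<bar>\<phi>\<bar> = \<bar>Im L\<bar> / real m" by (simp add: \<phi>_def)
    also have "\<dots> < (pi/2) / real m" by (rule divide_strict_right_mono[OF L mpos])
    also have "(pi/2) / real m = \<theta>/2" by (simp add: th)
    finally show ?thesis .
  qed
  have sp: "sin (\<theta> + \<phi>) > 0" by (rule sin_gt_zero) (use phi t0 t3 in auto)
  have sm: "sin (\<theta> - \<phi>) > 0" by (rule sin_gt_zero) (use phi t0 t3 in auto)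
  have R0: "R > 0" using C0 c0 R by simp
  define k where "k = R * sin (2*\<theta>)"
  have k0: "k > 0" using R0 s2 by (simp add: k_def)
  define v where "v = l * sin (\<theta> - \<phi>) / k"
  define w where "w = l * sin (\<theta> + \<phi>) / k"
  have v0: "v > 0" using l0 sm k0 by (simp add: v_def)
  have w0: "w > 0" using l0 sp k0 by (simp add: w_def)
  have "v + w = l * (sin (\<theta> - \<phi>) + sin (\<theta> + \<phi>)) / k" unfolding v_def w_def by (simp only: add_divide_distrib distrib_left)
  also have "sin (\<theta> - \<phi>) + sin (\<theta> + \<phi>) = sin (2*\<theta>) * (cos \<phi> / cos \<theta>)"
  proof -
    have sd: "sin (2*\<theta>) = 2 * sin \<theta> * cos \<theta>" by (rule sin_double)
    have "sin (\<theta> - \<phi>) + sin (\<theta> + \<phi>) = 2 * sin \<theta> * cos \<phi>" by (simp add: sin_add sin_diff)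
    then show ?thesis using c0 unfolding sd by (simp add: field_simps)
  qed
  finally have "v + w = l * cos \<phi> / C"
    using s2 R0 c0 C0 by (simp add: k_def R field_simps)
  moreover have "l * cos \<phi> \<le> norm x"
  proof -
    have "Re x = l * cos \<phi>" by (simp add: x)
    then show ?thesis using complex_Re_le_cmod[of x] by simp
  qed
  ultimately have vw1: "v + w < 1" using xC C0 by (simp add: x_def divide_less_eq)
  define A where "A = of_real R * \<beta> * cis (-\<theta>)"
  define B where "B = of_real R * \<beta> * cis \<theta>"
  have ident: "complex_of_real (sin (\<theta> - \<phi>)) * cis (-\<theta>) + complex_of_real (sin (\<theta> + \<phi>)) * cis \<theta>
      = complex_of_real (sin (2*\<theta>)) * cis \<phi>"
    unfolding sin_double[of \<theta>] by (simp add: complex_eq_iff sin_add sin_diff cos_add cos_diff algebra_simps)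
  have comb: "(1 - v - w) *\<^sub>R 0 + v *\<^sub>R A + w *\<^sub>R B = \<beta> * x"
  proof -
    have "v *\<^sub>R A + w *\<^sub>R B = \<beta> * of_real R * (of_real v * cis (-\<theta>) + of_real w * cis \<theta>)"
      by (simp add: A_def B_def scaleR_conv_of_real algebra_simps)
    also have "of_real v * cis (-\<theta>) + of_real w * cis \<theta> =
        of_real (l / k) * (complex_of_real (sin (\<theta> - \<phi>)) * cis (-\<theta>) + complex_of_real (sin (\<theta> + \<phi>)) * cis \<theta>)"
      by (simp add: v_def w_def algebra_simps)
    also have "\<dots> = of_real (l / k) * (complex_of_real (sin (2*\<theta>)) * cis \<phi>)" by (simp add: ident)
    finally have "v *\<^sub>R A + w *\<^sub>R B = \<beta> * (of_real (R * (l / k) * sin (2*\<theta>)) * cis \<phi>)"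
      by (simp add: algebra_simps)
    also have "R * (l / k) * sin (2*\<theta>) = l" using R0 s2 by (simp add: k_def)
    finally show ?thesis by (simp add: x)
  qed
  have ncol: "\<not> collinear {0, A, B}"
  proof
    assume "collinear {0, A, B}"
    then have "B / A \<in> \<real>" by (simp add: collinear_iff_Reals)
    moreover have "B / A = cis (2*\<theta>)"
    proof -
      have "of_real R * \<beta> \<noteq> 0" using R0 nb by auto
      then have "B / A = cis \<theta> / cis (-\<theta>)" by (simp add: A_def B_def)
      also have "\<dots> = cis (2*\<theta>)" by (simp add: divide_complex_def cis_divide[symmetric] cis_mult)
      finally show ?thesis .
    qed
    ultimately have "Im (cis (2*\<theta>)) = 0" by (simp add: complex_is_Real_iff)
    then show False using s2 by simp
  qed
  have "\<beta> * x \<in> interior (convex hull {0, A, B})"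
    unfolding interior_convex_hull_3_minimal[OF ncol DIM_complex]
    using comb v0 w0 vw1 by (intro CollectI exI[of _ "1 - v - w"] exI[of _ v] exI[of _ w]) auto
  then show ?thesis by (simp add: x_def A_def B_def)
qed


lemma geo_outside:
  fixes \<beta> L :: complex and R \<theta> :: real
  assumes m3: "m \<ge> 3" and th: "\<theta> = pi / real m" and nb: "norm \<beta> = 1" and R0: "R > 0"
    and L: "\<bar>Im L\<bar> < pi/2"
  shows "\<beta> * cis (2*\<theta>) * exp (L / of_nat m) \<notin> convex hull {0, of_real R * \<beta> * cis (-\<theta>), of_real R * \<beta> * cis \<theta>}"
proof
  define \<psi> where "\<psi> = Im L / real m"
  define l where "l = exp (Re L / real m)"
  have y: "exp (L / of_nat m) = of_real l * cis \<psi>" by (simp add: l_def \<psi>_def exp_polar_m)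
  have l0: "l > 0" by (simp add: l_def)
  have t0: "0 < \<theta>" and t3: "\<theta> \<le> pi/3" and s2: "0 < sin (2*\<theta>)"
    using theta_facts[OF m3] th by auto
  have mpos: "real m > 0" using m3 by simp
  have psi: "\<bar>\<psi>\<bar> < \<theta>/2"
  proof -
    have "\<bar>\<psi>\<bar> = \<bar>Im L\<bar> / real m" by (simp add: \<psi>_def)
    also have "\<dots> < (pi/2) / real m" by (rule divide_strict_right_mono[OF L mpos])
    also have "(pi/2) / real m = \<theta>/2" by (simp add: th)
    finally show ?thesis .
  qed
  have sp: "sin (\<theta> + \<psi>) > 0" by (rule sin_gt_zero) (use psi t0 t3 in auto)
  assume "\<beta> * cis (2*\<theta>) * exp (L / of_nat m) \<in> convex hull {0, of_real R * \<beta> * cis (-\<theta>), of_real R * \<beta> * cis \<theta>}"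
  then obtain u v w :: real where uvw: "0 \<le> u" "0 \<le> v" "0 \<le> w" "u + v + w = 1"
    and eq: "\<beta> * cis (2*\<theta>) * exp (L / of_nat m) = u *\<^sub>R 0 + v *\<^sub>R (of_real R * \<beta> * cis (-\<theta>)) + w *\<^sub>R (of_real R * \<beta> * cis \<theta>)"
    unfolding convex_hull_3 by blast
  have "\<beta> * (cis (2*\<theta>) * (of_real l * cis \<psi>)) = \<beta> * (of_real R * (of_real v * cis (-\<theta>) + of_real w * cis \<theta>))"
    using eq unfolding y by (simp add: scaleR_conv_of_real algebra_simps)
  then have eq2: "cis (2*\<theta>) * (of_real l * cis \<psi>) = of_real R * (of_real v * cis (-\<theta>) + of_real w * cis \<theta>)"
    using nb by auto
  have c1: "cis (-\<theta>) * cis (2*\<theta>) = cis \<theta>" by (simp add: cis_mult)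
  have c2: "cis (-\<theta>) * cis (-\<theta>) = cis (-(2*\<theta>))" by (simp add: cis_mult)
  have c3: "cis (-\<theta>) * cis \<theta> = 1" by (simp add: cis_mult)
  have c4: "cis \<theta> * cis \<psi> = cis (\<theta> + \<psi>)" by (simp add: cis_mult)
  have "cis (-\<theta>) * (cis (2*\<theta>) * (of_real l * cis \<psi>)) = of_real l * ((cis (-\<theta>) * cis (2*\<theta>)) * cis \<psi>)"
    by (simp add: algebra_simps)
  also have "\<dots> = of_real l * cis (\<theta> + \<psi>)" unfolding c1 c4 ..
  finally have "cis (-\<theta>) * (cis (2*\<theta>) * (of_real l * cis \<psi>)) = of_real l * cis (\<theta> + \<psi>)" .
  moreover have "cis (-\<theta>) * (of_real R * (of_real v * cis (-\<theta>) + of_real w * cis \<theta>)) =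
     of_real R * (of_real v * (cis (-\<theta>) * cis (-\<theta>)) + of_real w * (cis (-\<theta>) * cis \<theta>))"
    by (simp add: algebra_simps)
  then have "cis (-\<theta>) * (of_real R * (of_real v * cis (-\<theta>) + of_real w * cis \<theta>)) = of_real R * (of_real v * cis (-(2*\<theta>)) + of_real w)"
    unfolding c2 c3 by simp
  ultimately have "of_real l * cis (\<theta> + \<psi>) = of_real R * (of_real v * cis (-(2*\<theta>)) + complex_of_real w)"
    using eq2 by metis
  then have "Im (of_real l * cis (\<theta> + \<psi>)) = Im (of_real R * (of_real v * cis (-(2*\<theta>)) + complex_of_real w))"
    by simp
  then have "l * sin (\<theta> + \<psi>) = - (R * v * sin (2*\<theta>))" by simp
  moreover have "l * sin (\<theta> + \<psi>) > 0" using l0 sp by simp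
  moreover have "R * v * sin (2*\<theta>) \<ge> 0" using R0 uvw s2 by simp
  ultimately show False by linarith
qed

lemma seg_0A:
  fixes \<beta> c :: complex and C R \<theta> :: real
  assumes m3: "m \<ge> 3" and th: "\<theta> = pi / real m" and C0: "C > 0" and R0: "R > 0"
    and beta: "\<beta>^m = - c / complex_of_real C"
    and z: "z \<in> closed_segment 0 (of_real R * \<beta> * cis (-\<theta>))"
  shows "\<exists>l\<ge>0. z^m = complex_of_real l * c"
proof -
  obtain u :: real where u: "0 \<le> u" "u \<le> 1" and zu: "z = u *\<^sub>R (of_real R * \<beta> * cis (-\<theta>))"
    using z unfolding closed_segment_def by auto
  have "cis (-\<theta>) ^ m = cis (real m * (-\<theta>))" by (rule Complex.DeMoivre)
  also have "real m * (-\<theta>) = -pi" using m3 by (simp add: th)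
  finally have cm: "cis (-\<theta>) ^ m = -1" by (simp add: complex_eq_iff)
  have "z^m = of_real (u^m * R^m) * \<beta>^m * cis (-\<theta>) ^ m"
    by (simp add: zu scaleR_conv_of_real power_mult_distrib)
  also have "\<dots> = complex_of_real (u^m * R^m / C) * c"
    using C0 by (simp add: cm beta)
  finally show ?thesis using u R0 C0 by (intro exI[of _ "u^m * R^m / C"]) auto
qed

lemma seg_B0:
  fixes \<beta> c :: complex and C R \<theta> :: real
  assumes m3: "m \<ge> 3" and th: "\<theta> = pi / real m" and C0: "C > 0" and R0: "R > 0"
    and beta: "\<beta>^m = - c / complex_of_real C"
    and z: "z \<in> closed_segment (of_real R * \<beta> * cis \<theta>) 0"
  shows "\<exists>l\<ge>0. z^m = complex_of_real l * c"
proof -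
  obtain u :: real where u: "0 \<le> u" "u \<le> 1" and zu: "z = (1 - u) *\<^sub>R (of_real R * \<beta> * cis \<theta>)"
    using z unfolding closed_segment_def by auto
  have "cis \<theta> ^ m = cis (real m * \<theta>)" by (rule Complex.DeMoivre)
  also have "real m * \<theta> = pi" using m3 by (simp add: th)
  finally have cm: "cis \<theta> ^ m = -1" by (simp add: complex_eq_iff)
  have "z^m = of_real ((1-u)^m * R^m) * \<beta>^m * cis \<theta> ^ m"
    by (simp add: zu scaleR_conv_of_real power_mult_distrib)
  also have "\<dots> = complex_of_real ((1-u)^m * R^m / C) * c"
    using C0 by (simp add: cm beta)
  finally show ?thesis using u R0 C0 by (intro exI[of _ "(1-u)^m * R^m / C"]) auto
qed

lemma seg_AB:
  fixes \<beta> :: complex and C R \<theta> :: real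
  assumes nb: "norm \<beta> = 1" and R: "R * cos \<theta> = C" and R0: "R > 0"
    and z: "z \<in> closed_segment (of_real R * \<beta> * cis (-\<theta>)) (of_real R * \<beta> * cis \<theta>)"
  shows "norm z \<ge> C"
proof -
  obtain u :: real where u: "0 \<le> u" "u \<le> 1"
    and zu: "z = (1 - u) *\<^sub>R (of_real R * \<beta> * cis (-\<theta>)) + u *\<^sub>R (of_real R * \<beta> * cis \<theta>)"
    using z unfolding closed_segment_def by auto
  define y where "y = of_real (1-u) * cis (-\<theta>) + of_real u * cis \<theta>"
  have "z = of_real R * \<beta> * y" by (simp add: zu y_def scaleR_conv_of_real algebra_simps)
  then have "norm z = R * norm y" using nb R0 by (simp add: norm_mult)
  moreover have "Re y = cos \<theta>" by (simp add: y_def algebra_simps)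
  moreover have "Re y \<le> norm y" by (rule complex_Re_le_cmod)
  ultimately have "norm z \<ge> R * cos \<theta>" using R0 by (simp add: mult_left_mono)
  then show ?thesis using R by simp
qed

lemma PB_lemma:
  assumes dc: "delta_condition m \<delta> a" and m1: "m \<ge> 1"
  shows "norm (monic_poly m a z - z^m - a 0) \<le> (real (m-1) * \<delta>) * (1 + norm z ^ (m-1))"
proof -
  obtain n where mn: "m = Suc n" using m1 by (cases m) auto
  have "monic_poly m a z - z^m - a 0 = (\<Sum>i<n. a (Suc i) * z ^ Suc i)"
    unfolding monic_poly_def mn sum.lessThan_Suc_shift by simp
  then have "norm (monic_poly m a z - z^m - a 0) \<le> (\<Sum>i<n. norm (a (Suc i) * z ^ Suc i))"
    by (simp add: norm_sum)
  also have "\<dots> \<le> (\<Sum>i<n. \<delta> * (1 + norm z ^ n))"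
  proof (rule sum_mono)
    fix i assume i: "i \<in> {..<n}"
    have ai: "norm (a (Suc i)) < \<delta>" using dc i mn by (auto simp: delta_condition_def)
    have zi: "norm z ^ Suc i \<le> 1 + norm z ^ n"
    proof (cases "norm z \<le> 1")
      case True
      then have "norm z ^ Suc i \<le> 1" by (intro power_le_one) auto
      then show ?thesis by (smt (verit) zero_le_power norm_ge_zero)
    next
      case False
      then have "norm z ^ Suc i \<le> norm z ^ n" using i by (intro power_increasing) auto
      then show ?thesis by simp
    qed
    show "norm (a (Suc i) * z ^ Suc i) \<le> \<delta> * (1 + norm z ^ n)"
      unfolding norm_mult norm_power
      using ai zi norm_ge_zero[of "a (Suc i)"] by (intro mult_mono) (auto intro: order.trans[OF norm_ge_zero less_imp_le])
  qed
  also have "\<dots> = (real (m-1) * \<delta>) * (1 + norm z ^ (m-1))" by (simp add: mn)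
  finally show ?thesis .
qed

lemma cont_monic: "continuous_on UNIV (monic_poly m a)"
  unfolding monic_poly_def by (intro continuous_intros)

theorem mainTheorem11:
  fixes m :: nat and \<epsilon> :: real
  assumes "m \<ge> 3" and "\<epsilon> > 0"
  shows "\<exists>\<delta>>0. \<forall>a :: nat \<Rightarrow> complex.
           delta_condition m \<delta> a \<and> simply_connected (Omega (monic_poly m a))
           \<longrightarrow> norm (a 0) < 2 powr (1 / real (m - 1)) + \<epsilon>"
proof -
  note m3 = assms(1)
  define e where "e = min \<epsilon> 1"
  define s where "s = 2 powr (1 / real (m-1))"
  define D where "D = e / (24 * (1 + 4^(m-1)))"
  define \<delta> where "\<delta> = D / real (m-1)"
  have e0: "0 < e" and e1: "e \<le> 1" and ee: "e \<le> \<epsilon>" using assms by (auto simp: e_def)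
  have mpos: "real (m-1) > 0" using m3 by simp
  have s1: "1 \<le> s" unfolding s_def by (rule ge_one_powr_ge_zero) auto
  have s2: "s^(m-1) = 2"
  proof -
    have "s^(m-1) = s powr real (m-1)" using s1 by (simp add: powr_realpow)
    also have "\<dots> = 2 powr (1 / real (m-1) * real (m-1))" by (simp add: s_def powr_powr)
    also have "\<dots> = 2" using mpos by simp
    finally show ?thesis .
  qed
  have p4: "(0::real) < 1 + 4^(m-1)" by (simp add: add_pos_nonneg)
  have D0: "0 < D" using e0 p4 by (simp add: D_def)
  have Dsmall: "D * (1 + 4^(m-1)) \<le> e/24"
  proof -
    define X :: real where "X = 1 + 4^(m-1)"
    have "X > 0" using p4 by (simp add: X_def)
    then have "e / (24 * X) * X = e / 24" by (simp add: field_simps)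
    then show ?thesis by (simp add: D_def X_def)
  qed
  have d0: "\<delta> > 0" using D0 mpos by (simp add: \<delta>_def)
  have mD: "real (m-1) * \<delta> = D" using mpos by (simp add: \<delta>_def)
  show ?thesis
  proof (intro exI[of _ \<delta>] conjI allI impI d0)
    fix a :: "nat \<Rightarrow> complex"
    assume H: "delta_condition m \<delta> a \<and> simply_connected (Omega (monic_poly m a))"
    then have dc: "delta_condition m \<delta> a" and SC: "simply_connected (Omega (monic_poly m a))" by auto
    show "norm (a 0) < 2 powr (1 / real (m - 1)) + \<epsilon>"
    proof (rule ccontr)
      assume "\<not> ?thesis"
      then have Cge: "s + e \<le> norm (a 0)" using ee by (simp add: s_def)
      define f where "f = monic_poly m a"
      define c where "c = a 0"
      define C where "C = norm c"
      have PB: "norm (f z - z^m - c) \<le> D * (1 + norm z ^ (m-1))" for z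
        using PB_lemma[OF dc, of z] m3 mD by (simp add: f_def c_def)
      interpret dyn m f c C s e D
        by unfold_locales (use m3 cont_monic PB s1 s2 e0 e1 Cge D0 Dsmall in
            \<open>auto simp: f_def c_def C_def\<close>)
      have C0: "C > 0" using C1 by simp
      define \<theta> where "\<theta> = pi / real m"
      have t0: "0 < \<theta>" and s2t: "0 < sin (2*\<theta>)" and c0: "0 < cos \<theta>"
        using theta_facts[OF m3] by (auto simp: \<theta>_def)
      define \<beta> where "\<beta> = cis ((Arg c + pi) / real m)"
      have nb: "norm \<beta> = 1" by (simp add: \<beta>_def)
      have cC: "c / complex_of_real C = cis (Arg c)"
      proof -
        have "c = complex_of_real C * cis (Arg c)" using rcis_cmod_Arg[of c] by (simp add: rcis_def C_def)
        then show ?thesis using C0 by (simp add: field_simps)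
      qed
      have beta: "\<beta>^m = - c / complex_of_real C"
      proof -
        have "\<beta>^m = cis (real m * ((Arg c + pi) / real m))" unfolding \<beta>_def by (rule Complex.DeMoivre)
        also have "real m * ((Arg c + pi) / real m) = Arg c + pi" using m3 by simp
        also have "cis (Arg c + pi) = - cis (Arg c)" by (simp add: complex_eq_iff)
        finally show ?thesis using cC by simp
      qed
      define \<beta>2 where "\<beta>2 = \<beta> * cis (2*\<theta>)"
      have beta2: "\<beta>2^m = - c / complex_of_real C"
      proof -
        have "cis (2*\<theta>) ^ m = cis (real m * (2*\<theta>))" by (rule Complex.DeMoivre)
        also have "real m * (2*\<theta>) = 2*pi" using m3 by (simp add: \<theta>_def)
        finally have "cis (2*\<theta>) ^ m = 1" by (simp add: complex_eq_iff)
        then show ?thesis by (simp add: \<beta>2_def power_mult_distrib beta)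
      qed
      obtain q L where fq: "f q = q" and qe: "q = \<beta> * exp (L / of_nat m)"
        and L: "\<bar>Im L\<bar> < pi/2" and qC: "norm q < C"
        using fixpt[OF beta] by blast
      obtain p L' where fp: "f p = p" and pe: "p = \<beta>2 * exp (L' / of_nat m)"
        and L': "\<bar>Im L'\<bar> < pi/2"
        using fixpt[OF beta2] by blast
      define R where "R = C / cos \<theta>"
      have R0: "R > 0" using C0 c0 by (simp add: R_def)
      have RC: "R * cos \<theta> = C" using c0 by (simp add: R_def)
      define A where "A = complex_of_real R * \<beta> * cis (-\<theta>)"
      define B where "B = complex_of_real R * \<beta> * cis \<theta>"
      define H where "H = convex hull {0, A, B}"
      define \<gamma> where "\<gamma> = linepath 0 A +++ linepath A B +++ linepath B 0"
      have xn: "norm (exp (L / of_nat m)) < C" using qC nb by (simp add: qe norm_mult)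
      have qin: "q \<in> interior H"
        unfolding qe H_def A_def B_def
        by (rule geo_inside[OF m3 \<theta>_def nb C0 R_def L xn])
      have pout: "p \<notin> H"
        unfolding pe H_def A_def B_def \<beta>2_def
        by (rule geo_outside[OF m3 \<theta>_def nb R0 L'])
      have pim: "path_image \<gamma> = closed_segment 0 A \<union> closed_segment A B \<union> closed_segment B 0"
        by (simp add: \<gamma>_def path_image_join Un_assoc)
      have E: "path_image \<gamma> \<subseteq> escaping_set f"
      proof
        fix z assume "z \<in> path_image \<gamma>"
        then consider "z \<in> closed_segment 0 A" | "z \<in> closed_segment A B" | "z \<in> closed_segment B 0"
          using pim by auto
        then show "z \<in> escaping_set f"
        proof cases
          case 1
          then obtain l where "l \<ge> 0" "z^m = complex_of_real l * c"
            using seg_0A[OF m3 \<theta>_def C0 R0 beta] by (auto simp: A_def)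
          then show ?thesis by (intro gap)
        next
          case 2
          then have "norm z \<ge> C" using seg_AB[OF nb RC R0] by (simp add: A_def B_def)
          then show ?thesis using e0 by (intro esc_big) auto
        next
          case 3
          then obtain l where "l \<ge> 0" "z^m = complex_of_real l * c"
            using seg_B0[OF m3 \<theta>_def C0 R0 beta] by (auto simp: B_def)
          then show ?thesis by (intro gap)
        qed
      qed
      have imH: "path_image \<gamma> \<subseteq> H"
        unfolding pim H_def
        by (intro Un_least closed_segment_subset_convex_hull hull_inc) auto
      have qH: "q \<in> H" using qin interior_subset by blast
      have "winding_number \<gamma> q = 0"
      proof (rule topo_main[OF SC[folded f_def]])
        show "path \<gamma>" by (simp add: \<gamma>_def)
        show "pathfinish \<gamma> = pathstart \<gamma>" by (simp add: \<gamma>_def)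
        show "path_image \<gamma> \<subseteq> escaping_set f" by (fact E)
        show "q \<notin> escaping_set f" using fixed_not_esc[of f q] fq by blast
        show "p \<notin> escaping_set f" using fixed_not_esc[of f p] fp by blast
        fix t :: real assume t: "t \<in> {0..1}"
        have "\<gamma> t \<in> H" using imH t unfolding path_image_def by auto
        then have "closed_segment q (\<gamma> t) \<subseteq> H"
          using qH unfolding H_def by (intro closed_segment_subset_convex_hull)
        then show "p \<notin> closed_segment q (\<gamma> t)" using pout by auto
      qed
      moreover have "winding_number \<gamma> q = (if 0 < Im ((A - 0) * cnj (A - q)) then 1 else -1)"
        unfolding \<gamma>_def by (rule winding_number_triangle) (use qin in \<open>simp add: H_def\<close>)
      ultimately show False by (simp split: if_splits)
    qed
  qed
qed


end
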